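(* Let $F\subseteq\mathbb{R}^2$ be self-homothetic, generated by an IFS $\Phi$ with uniform contraction ratio $\lambda$ and the SSC, and not contained in an affine line. Suppose that $\gamma\cdot(P_1(F),0)+t\subseteq F$ for some $\gamma>0$, $t\in\mathbb{R}^2$. Then the projected IFS $P_1\Phi$ has the weak separation condition.
   Context: Self-homothetic: $\Phi=\{\phi_i(z)=\lambda z+t_i\}$. SSC: $\phi_i(F)$ pairwise disjoint. $P_1(x,y)=x$; $(A,0)=\{(a,0):a\in A\}$. $P_1\Phi=\{x\mapsto\lambda x+P_1(t_i)\}$, an IFS on $\mathbb{R}$ with attractor $P_1(F)$. WSC: $\mathrm{Id}\notin\overline{\{\psi_I^{-1}\circ\psi_J: I\ne J\}\setminus\{\mathrm{Id}\}}$, closure with respect to pointwise convergence on the group of similarities of $\mathbb{R}$. *)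

theory Defs
  imports "HOL-Analysis.Analysis"
begin

definition hom_map :: "real \<Rightarrow> 'a::real_vector \<Rightarrow> 'a \<Rightarrow> 'a" where
  "hom_map lam t z = lam *\<^sub>R z + t"

definition word_map :: "real \<Rightarrow> ('i \<Rightarrow> 'a::real_vector) \<Rightarrow> 'i list \<Rightarrow> 'a \<Rightarrow> 'a" where
  "word_map lam t w = foldr (\<lambda>i f. hom_map lam (t i) \<circ> f) w id"

definition is_attractor :: "real \<Rightarrow> ('i \<Rightarrow> 'a::real_normed_vector) \<Rightarrow> 'i set \<Rightarrow> 'a set \<Rightarrow> bool" where
  "is_attractor lam t I F \<longleftrightarrow> compact F \<and> F \<noteq> {} \<and> F = (\<Union>i\<in>I. hom_map lam (t i) ` F)"

definition SSC :: "real \<Rightarrow> ('i \<Rightarrow> 'a::real_vector) \<Rightarrow> 'i set \<Rightarrow> 'a set \<Rightarrow> bool" where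
  "SSC lam t I F \<longleftrightarrow> (\<forall>i\<in>I. \<forall>j\<in>I. i \<noteq> j \<longrightarrow> hom_map lam (t i) ` F \<inter> hom_map lam (t j) ` F = {})"

text \<open>Weak separation condition for a homothetic IFS on the real line; the closure is taken
  in the topology of pointwise convergence (product topology on real \<Rightarrow> real). Since the
  identity lies in the group of similarities, the closure relative to that group contains id
  iff the closure in the full function space does.\<close>
definition WSC :: "real \<Rightarrow> ('i \<Rightarrow> real) \<Rightarrow> 'i set \<Rightarrow> bool" where
  "WSC lam t I \<longleftrightarrow>
     id \<notin> closure ({inv (word_map lam t u) \<circ> word_map lam t v | u v.
                      u \<in> lists I \<and> v \<in> lists I \<and> u \<noteq> v} - {id})"

end

theory Submission
  imports Defs
begin

lemma word_map_Cons: "word_map lam t (i#w) x = lam *\<^sub>R word_map lam t w x + t i"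
  by (simp add: word_map_def hom_map_def)

lemma word_map_Nil: "word_map lam t [] x = x"
  by (simp add: word_map_def)

lemma word_map_closed: "word_map lam t w x = lam ^ length w *\<^sub>R x + word_map lam t w 0"
  by (induction w) (auto simp: word_map_Cons word_map_Nil algebra_simps)

lemma word_map_fst: "fst (word_map lam t w z) = word_map lam (\<lambda>i. fst (t i)) w (fst z)"
  by (induction w) (auto simp: word_map_Cons word_map_Nil)

lemma word_map_sub:
  assumes "A = (\<Union>i\<in>I. hom_map lam (t i) ` A)"
  shows "w \<in> lists I \<Longrightarrow> word_map lam t w ` A \<subseteq> A"
proof (induction w)
  case Nil then show ?case by (simp add: word_map_Nil)
next
  case (Cons i w)
  have iI: "i \<in> I" "w \<in> lists I" using Cons.prems by auto
  have "word_map lam t (i#w) ` A = hom_map lam (t i) ` (word_map lam t w ` A)"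
    by (auto simp: word_map_Cons hom_map_def image_iff)
  also have "\<dots> \<subseteq> hom_map lam (t i) ` A" using Cons.IH iI by auto
  also have "\<dots> \<subseteq> (\<Union>i\<in>I. hom_map lam (t i) ` A)" using iI by (auto intro!: bexI[of _ i])
  also have "\<dots> = A" using assms(1) by simp
  finally show ?case .
qed

lemma pow_bracket:
  fixes x lam :: real
  assumes "0 < x" "x < 1" "0 < lam" "lam < 1"
  shows "\<exists>k. lam ^ Suc k \<le> x \<and> x < lam ^ k"
proof -
  obtain n where n: "lam ^ n < x" using real_arch_pow_inv[OF assms(1) assms(4)] by blast
  have "\<exists>k<n. (\<forall>i\<le>k. \<not> (lam ^ i \<le> x)) \<and> lam ^ Suc k \<le> x"
    by (rule ex_least_nat_less) (use n assms in auto)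
  then show ?thesis by (meson order.refl not_le)
qed

lemma word_map_real: "word_map lam (b::'i\<Rightarrow>real) w x = lam ^ length w * x + word_map lam b w 0"
  using word_map_closed[of lam b w x] by simp

lemma notWSC_shift:
  fixes b :: "'i \<Rightarrow> real"
  assumes lam: "0 < lam" "lam < 1" and nw: "\<not> WSC lam b I" and dpos: "\<delta> > 0"
  shows "\<exists>c u v. 0 < c \<and> c < \<delta> \<and> u \<in> lists I \<and> v \<in> lists I \<and>
            (\<forall>x. word_map lam b v x = word_map lam b u (x + c))"
proof -
  define S where "S = {inv (word_map lam b u) \<circ> word_map lam b v | u v.
                      u \<in> lists I \<and> v \<in> lists I \<and> u \<noteq> v} - {id}"
  define d where "d = min \<delta> ((1 - lam) / 2)"
  have dpos': "d > 0" using dpos lam by (simp add: d_def)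
  have cl: "id \<in> closure S" using nw by (simp add: WSC_def S_def)
  define U where "U = (\<lambda>f::real\<Rightarrow>real. f 0) -` ball 0 d \<inter> (\<lambda>f::real\<Rightarrow>real. f 1) -` ball 1 d"
  have "open U" unfolding U_def
    by (intro open_Int open_vimage open_ball continuous_on_product_coordinates)
  moreover have "id \<in> U" using dpos' by (simp add: U_def)
  ultimately have "S \<inter> U \<noteq> {}" using cl unfolding closure_iff_nhds_not_empty by blast
  then obtain f u v where f: "f = inv (word_map lam b u) \<circ> word_map lam b v" "u \<in> lists I"
     "v \<in> lists I" "f \<noteq> id" "f \<in> U"
    unfolding S_def by blast
  define p where "p = length u"
  define q where "q = length v"
  define au where "au = word_map lam b u 0"
  define av where "av = word_map lam b v 0"
  have Wu: "\<And>x. word_map lam b u x = lam ^ p * x + au"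
    unfolding p_def au_def by (rule word_map_real)
  have Wv: "\<And>x. word_map lam b v x = lam ^ q * x + av"
    unfolding q_def av_def by (rule word_map_real)
  have lp: "lam ^ p > 0" using lam by simp
  have injU: "inj (word_map lam b u)" unfolding inj_def Wu using lp lam by simp
  have fx: "f x = (lam ^ q * x + av - au) / lam ^ p" for x
  proof -
    have "word_map lam b u ((lam ^ q * x + av - au) / lam ^ p) = word_map lam b v x"
      using lp lam by (simp add: Wu Wv)
    then have "inv (word_map lam b u) (word_map lam b v x) = (lam ^ q * x + av - au) / lam ^ p"
      by (metis inv_f_f[OF injU])
    then show ?thesis using f(1) by simp
  qed
  have f0: "\<bar>f 0\<bar> < d" and f1: "\<bar>f 1 - 1\<bar> < d" using f(5) by (auto simp: U_def dist_real_def)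
  have ratio: "f 1 - f 0 = lam ^ q / lam ^ p" using lp lam by (simp add: fx field_simps)
  have "\<bar>lam ^ q / lam ^ p - 1\<bar> < 2 * d" using f0 f1 ratio by linarith
  moreover have "2 * d \<le> 1 - lam" unfolding d_def by (simp add: min_def)
  ultimately have r2: "\<bar>lam ^ q / lam ^ p - 1\<bar> < 1 - lam" by linarith
  have pq: "p = q"
  proof (rule ccontr)
    assume "p \<noteq> q"
    then consider "p < q" | "q < p" by linarith
    then show False
    proof cases
      case 1
      then have "lam ^ q / lam ^ p = lam ^ (q - p)"
        using lam by (simp add: power_diff)
      moreover have "lam ^ (q - p) \<le> lam"
        using 1 lam power_decreasing[of 1 "q - p" lam] by simp
      ultimately show False using r2 lam by (smt (verit))
    next
      case 2
      then have e: "lam ^ q / lam ^ p = 1 / lam ^ (p - q)"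
        using lam by (simp add: power_diff)
      have le: "lam ^ (p - q) \<le> lam"
        using 2 lam power_decreasing[of 1 "p - q" lam] by simp
      have pos: "lam ^ (p - q) > 0" using lam by simp
      have "1 / lam \<le> 1 / lam ^ (p - q)" using le pos by (simp add: frac_le)
      moreover have "1 / lam - 1 \<ge> 1 - lam"
      proof -
        have "(1 - lam)^2 \<ge> 0" by simp
        hence "1 \<ge> lam * (2 - lam)" by (simp add: power2_eq_square algebra_simps)
        thus ?thesis using lam by (simp add: field_simps)
      qed
      ultimately show False using r2 e by (smt (verit))
    qed
  qed
  define c0 where "c0 = (av - au) / lam ^ p"
  have fc: "f x = x + c0" for x using lp lam by (simp add: fx pq c0_def field_simps)
  have "c0 \<noteq> 0"
  proof
    assume "c0 = 0"
    then have "f = id" using fc by (auto simp: fun_eq_iff)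
    then show False using f(4) by simp
  qed
  have c0d: "\<bar>c0\<bar> < \<delta>" using f0 fc[of 0] d_def by simp
  show ?thesis
  proof (cases "c0 > 0")
    case True
    have "\<forall>x. word_map lam b v x = word_map lam b u (x + c0)"
      using lp lam by (simp add: Wu Wv pq c0_def field_simps)
    then show ?thesis using True c0d f(2,3) by (intro exI[of _ c0] exI[of _ u] exI[of _ v]) auto
  next
    case False
    then have neg: "- c0 > 0" using \<open>c0 \<noteq> 0\<close> by simp
    have "\<forall>x. word_map lam b u x = word_map lam b v (x + - c0)"
      using lp lam by (simp add: Wu Wv pq c0_def field_simps)
    then show ?thesis using neg c0d f(2,3) by (intro exI[of _ "- c0"] exI[of _ v] exI[of _ u]) auto
  qed
qed

lemma chain_in_G:
  fixes b :: "'i \<Rightarrow> real" and G :: "real set"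
  assumes lam: "0 < lam" "lam < 1" and nw: "\<not> WSC lam b I" and I: "I \<noteq> {}"
    and Gsub: "\<And>w. w \<in> lists I \<Longrightarrow> word_map lam b w ` G \<subseteq> G" and G: "G \<noteq> {}"
  shows "\<forall>r0>0. \<exists>r \<sigma> \<beta>. 0 < r \<and> r \<le> r0 \<and>
           (\<forall>i<N. lam \<le> \<sigma> (Suc i) - \<sigma> i \<and> \<sigma> (Suc i) - \<sigma> i \<le> 1) \<and>
           (\<forall>i\<le>N. r * \<sigma> i + \<beta> \<in> G)"
proof (induction N)
  case 0
  obtain x0 where "x0 \<in> G" using G by blast
  show ?case
  proof (intro allI impI)
    fix r0 :: real assume "r0 > 0"
    then show "\<exists>r \<sigma> \<beta>. 0 < r \<and> r \<le> r0 \<and>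
           (\<forall>i<0. lam \<le> \<sigma> (Suc i) - \<sigma> i \<and> \<sigma> (Suc i) - \<sigma> i \<le> 1) \<and>
           (\<forall>i\<le>0. r * \<sigma> i + \<beta> \<in> G)"
      using \<open>x0 \<in> G\<close> by (intro exI[of _ r0] exI[of _ "\<lambda>_. 0"] exI[of _ x0]) auto
  qed
next
  case (Suc N)
  show ?case
  proof (intro allI impI)
    fix r0 :: real assume r0: "r0 > 0"
    obtain r \<sigma> \<beta> where rs: "0 < r" "r \<le> r0"
      "\<forall>i<N. lam \<le> \<sigma> (Suc i) - \<sigma> i \<and> \<sigma> (Suc i) - \<sigma> i \<le> 1"
      "\<forall>i\<le>N. r * \<sigma> i + \<beta> \<in> G"
      using Suc.IH r0 by blast
    obtain c u v where cuv: "0 < c" "c < r" "u \<in> lists I" "v \<in> lists I"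
      "\<forall>x. word_map lam b v x = word_map lam b u (x + c)"
      using notWSC_shift[OF lam nw rs(1)] by blast
    have x01: "0 < c / r" "c / r < 1" using cuv rs by auto
    obtain m where m: "lam ^ Suc m \<le> c / r" "c / r < lam ^ m"
      using pow_bracket[OF x01 lam] by blast
    obtain i0 where i0: "i0 \<in> I" using I by blast
    define w where "w = replicate m i0"
    have wI: "w \<in> lists I" using i0 by (auto simp: w_def)
    define n where "n = length u"
    define au where "au = word_map lam b u 0"
    define aw where "aw = word_map lam b w 0"
    have Wu: "\<And>x. word_map lam b u x = lam ^ n * x + au"
      unfolding n_def au_def by (rule word_map_real)
    have Ww: "\<And>x. word_map lam b w x = lam ^ m * x + aw"
    proof -
      fix x
      have "word_map lam b w x = lam ^ length w * x + aw" unfolding aw_def by (rule word_map_real)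
      then show "word_map lam b w x = lam ^ m * x + aw" by (simp add: w_def)
    qed
    define Q where "Q i = lam ^ m * (r * \<sigma> i + \<beta>) + aw" for i
    have QG: "Q i \<in> G" if "i \<le> N" for i
    proof -
      have "word_map lam b w (r * \<sigma> i + \<beta>) \<in> G" using Gsub[OF wI] rs(4) that by blast
      then show ?thesis by (simp add: Ww Q_def)
    qed
    have QG1: "lam ^ n * Q i + au \<in> G" if "i \<le> N" for i
      proof -
      have "word_map lam b u (Q i) \<in> G" using Gsub[OF cuv(3)] QG[OF that] by blast
      then show ?thesis by (simp add: Wu)
    qed
    have QG2: "lam ^ n * (Q i + c) + au \<in> G" if "i \<le> N" for i
    proof -
      have "word_map lam b v (Q i) \<in> G" using Gsub[OF cuv(4)] QG[OF that] by blast
      then show ?thesis using cuv(5) Wu by simp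
    qed
    define d where "d = c / (lam ^ m * r)"
    have lm: "lam ^ m > 0" using lam by simp
    have dd: "lam \<le> d" "d \<le> 1"
    proof -
      have e: "d = (c / r) / lam ^ m" unfolding d_def by (simp add: divide_divide_eq_left mult.commute)
      have "lam * lam ^ m \<le> c / r" using m(1) by simp
      then show "lam \<le> d" unfolding e using lm by (metis pos_le_divide_eq)
      show "d \<le> 1" unfolding e using lm m(2) by (metis divide_le_eq_1_pos less_imp_le)
    qed
    define r' where "r' = lam ^ (n + m) * r"
    define \<beta>' where "\<beta>' = lam ^ n * (lam ^ m * \<beta> + aw) + au"
    define \<sigma>' where "\<sigma>' = \<sigma>(Suc N := \<sigma> N + d)"
    have r'pos: "0 < r'" using lam rs by (simp add: r'_def)
    have r'le: "r' \<le> r0"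
    proof -
      have "lam ^ (n + m) \<le> 1" using lam by (simp add: power_le_one)
      then have "r' \<le> r" unfolding r'_def using rs(1) by (simp add: mult_left_le_one_le)
      then show ?thesis using rs(2) by simp
    qed
    have gaps: "\<forall>i<Suc N. lam \<le> \<sigma>' (Suc i) - \<sigma>' i \<and> \<sigma>' (Suc i) - \<sigma>' i \<le> 1"
    proof (intro allI impI)
      fix i assume "i < Suc N"
      then consider "i < N" | "i = N" by linarith
      then show "lam \<le> \<sigma>' (Suc i) - \<sigma>' i \<and> \<sigma>' (Suc i) - \<sigma>' i \<le> 1"
        by cases (use rs(3) dd in \<open>auto simp: \<sigma>'_def\<close>)
    qed
    have pts: "\<forall>i\<le>Suc N. r' * \<sigma>' i + \<beta>' \<in> G"
    proof (intro allI impI)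
      fix i assume "i \<le> Suc N"
      then consider "i \<le> N" | "i = Suc N" by linarith
      then show "r' * \<sigma>' i + \<beta>' \<in> G"
      proof cases
        case 1
        have "r' * \<sigma>' i + \<beta>' = lam ^ n * Q i + au"
          using 1 by (simp add: \<sigma>'_def r'_def \<beta>'_def Q_def power_add algebra_simps)
        then show ?thesis using QG1[OF 1] by simp
      next
        case 2
        have "r' * \<sigma>' i + \<beta>' = lam ^ n * (Q N + c) + au"
          using 2 lm rs(1) lam by (simp add: \<sigma>'_def r'_def \<beta>'_def Q_def d_def power_add field_simps)
        then show ?thesis using QG2[of N] by simp
      qed
    qed
    show "\<exists>r \<sigma> \<beta>. 0 < r \<and> r \<le> r0 \<and>
           (\<forall>i<Suc N. lam \<le> \<sigma> (Suc i) - \<sigma> i \<and> \<sigma> (Suc i) - \<sigma> i \<le> 1) \<and>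
           (\<forall>i\<le>Suc N. r * \<sigma> i + \<beta> \<in> G)"
      using r'pos r'le gaps pts by blast
  qed
qed

lemma sep_pieces:
  fixes t :: "'i \<Rightarrow> 'a::euclidean_space"
  assumes "finite I" "compact F" "SSC lam t I F"
  shows "\<exists>d0>0. \<forall>i\<in>I. \<forall>j\<in>I. i \<noteq> j \<longrightarrow>
     (\<forall>p\<in>hom_map lam (t i) ` F. \<forall>q\<in>hom_map lam (t j) ` F. d0 \<le> dist p q)"
proof -
  define P where "P = {(i,j). i \<in> I \<and> j \<in> I \<and> i \<noteq> j}"
  have "P \<subseteq> I \<times> I" by (auto simp: P_def)
  then have finP: "finite P" using assms(1) by (meson finite_SigmaI finite_subset)
  have cpt: "compact (hom_map lam c ` F)" for c
    using assms(2) by (intro compact_continuous_image) (auto simp: hom_map_def intro!: continuous_intros)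
  have "\<forall>ij\<in>P. \<exists>d>0. \<forall>p\<in>hom_map lam (t (fst ij)) ` F. \<forall>q\<in>hom_map lam (t (snd ij)) ` F. d \<le> dist p q"
  proof
    fix ij assume "ij \<in> P"
    then have "fst ij \<in> I" "snd ij \<in> I" "fst ij \<noteq> snd ij" unfolding P_def by auto
    then have "hom_map lam (t (fst ij)) ` F \<inter> hom_map lam (t (snd ij)) ` F = {}"
      using assms(3) unfolding SSC_def by blast
    then show "\<exists>d>0. \<forall>p\<in>hom_map lam (t (fst ij)) ` F. \<forall>q\<in>hom_map lam (t (snd ij)) ` F. d \<le> dist p q"
      using separate_compact_closed[OF cpt compact_imp_closed[OF cpt]] by blast
  qed
  then obtain D where D: "\<forall>ij\<in>P. D ij > 0 \<and> (\<forall>p\<in>hom_map lam (t (fst ij)) ` F. \<forall>q\<in>hom_map lam (t (snd ij)) ` F. D ij \<le> dist p q)"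
    by metis
  define d0 where "d0 = Min (insert 1 (D ` P))"
  have d0pos: "d0 > 0" unfolding d0_def using finP D by (subst Min_gr_iff) auto
  have d0le: "d0 \<le> D ij" if "ij \<in> P" for ij unfolding d0_def using finP that by (intro Min_le) auto
  show ?thesis
  proof (intro exI[of _ d0] conjI ballI impI d0pos)
    fix i j p q assume ij: "i \<in> I" "j \<in> I" "i \<noteq> j"
      and p: "p \<in> hom_map lam (t i) ` F" and q: "q \<in> hom_map lam (t j) ` F"
    have P: "(i, j) \<in> P" using ij by (simp add: P_def)
    then have "D (i, j) \<le> dist p q" using D p q by fastforce
    then show "d0 \<le> dist p q" using d0le[OF P] by simp
  qed
qed

lemma one_piece:
  fixes t :: "'i \<Rightarrow> 'a::real_normed_vector"
  assumes Feq: "F = (\<Union>i\<in>I. hom_map lam (t i) ` F)"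
    and sep: "\<forall>i\<in>I. \<forall>j\<in>I. i \<noteq> j \<longrightarrow>
     (\<forall>p\<in>hom_map lam (t i) ` F. \<forall>q\<in>hom_map lam (t j) ` F. d0 \<le> dist p q)"
    and pF: "\<forall>i\<le>N. p i \<in> F" and close: "\<forall>i<N. dist (p i) (p (Suc i)) < d0"
  shows "\<exists>j\<in>I. \<forall>i\<le>N. p i \<in> hom_map lam (t j) ` F"
proof -
  have "p 0 \<in> F" using pF by simp
  then obtain j where j: "j \<in> I" "p 0 \<in> hom_map lam (t j) ` F" using Feq by blast
  have "i \<le> N \<longrightarrow> p i \<in> hom_map lam (t j) ` F" for i
  proof (induction i)
    case 0 then show ?case using j by simp
  next
    case (Suc i)
    show ?case
    proof
      assume iN: "Suc i \<le> N"
      then have pi: "p i \<in> hom_map lam (t j) ` F" using Suc.IH by simp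
      have "p (Suc i) \<in> F" using pF iN by simp
      then obtain j' where j': "j' \<in> I" "p (Suc i) \<in> hom_map lam (t j') ` F" using Feq by blast
      have "dist (p i) (p (Suc i)) < d0" using close iN by simp
      moreover have "j' = j"
      proof (rule ccontr)
        assume "j' \<noteq> j" then have "j \<noteq> j'" by simp
        then have "d0 \<le> dist (p i) (p (Suc i))" using sep[rule_format, OF j(1) j'(1) _ pi j'(2)] by simp
        with \<open>dist (p i) (p (Suc i)) < d0\<close> show False by simp
      qed
      ultimately have "j' = j" by simp
      then show "p (Suc i) \<in> hom_map lam (t j) ` F" using j' by simp
    qed
  qed
  then show ?thesis using j(1) by blast
qed

lemma chain_bound:
  fixes t :: "'i \<Rightarrow> 'a::real_normed_vector"
  assumes lam: "0 < lam" "lam < 1" and d0: "d0 > 0"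
    and Feq: "F = (\<Union>i\<in>I. hom_map lam (t i) ` F)"
    and sep: "\<forall>i\<in>I. \<forall>j\<in>I. i \<noteq> j \<longrightarrow>
     (\<forall>p\<in>hom_map lam (t i) ` F. \<forall>q\<in>hom_map lam (t j) ` F. d0 \<le> dist p q)"
    and B: "\<forall>x\<in>F. \<forall>y\<in>F. dist x y \<le> B"
  shows "\<forall>N p. (\<forall>i\<le>N. p i \<in> F) \<longrightarrow> (\<forall>i<N. dist (p i) (p (Suc i)) < d0 * lam ^ k)
            \<longrightarrow> dist (p 0) (p N) \<le> lam ^ Suc k * B"
proof (induction k)
  case 0
  show ?case
  proof (intro allI impI)
    fix N p assume pF: "\<forall>i\<le>N. p i \<in> F" and cl: "\<forall>i<N. dist (p i) (p (Suc i)) < d0 * lam ^ 0"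
    obtain j where j: "j \<in> I" "\<forall>i\<le>N. p i \<in> hom_map lam (t j) ` F"
      using one_piece[OF Feq sep pF] cl by auto
    obtain z0 where z0: "z0 \<in> F" "p 0 = hom_map lam (t j) z0" using j(2) by blast
    obtain z1 where z1: "z1 \<in> F" "p N = hom_map lam (t j) z1" using j(2) by blast
    have "dist (p 0) (p N) = lam * dist z0 z1"
      using lam by (simp add: z0 z1 hom_map_def dist_norm scaleR_diff_right[symmetric])
    also have "\<dots> \<le> lam * B" using B z0 z1 lam by (simp add: mult_left_mono)
    finally show "dist (p 0) (p N) \<le> lam ^ Suc 0 * B" by simp
  qed
next
  case (Suc k)
  show ?case
  proof (intro allI impI)
    fix N p assume pF: "\<forall>i\<le>N. p i \<in> F" and cl: "\<forall>i<N. dist (p i) (p (Suc i)) < d0 * lam ^ Suc k"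
    have "lam ^ Suc k \<le> 1" using lam by (intro power_le_one) auto
    then have "d0 * lam ^ Suc k \<le> d0" using lam d0 by (simp add: mult_left_le_one_le)
    then obtain j where j: "j \<in> I" "\<forall>i\<le>N. p i \<in> hom_map lam (t j) ` F"
      using one_piece[OF Feq sep pF] cl by force
    define q where "q i = (1 / lam) *\<^sub>R (p i - t j)" for i
    have qF: "\<forall>i\<le>N. q i \<in> F"
    proof (intro allI impI)
      fix i assume "i \<le> N"
      then obtain z where z: "z \<in> F" "p i = hom_map lam (t j) z" using j(2) by blast
      then have "q i = z" using lam by (simp add: q_def hom_map_def)
      then show "q i \<in> F" using z by simp
    qed
    have dq: "dist (q a) (q b') = dist (p a) (p b') / lam" for a b'
    proof -
      have "q a - q b' = (1 / lam) *\<^sub>R (p a - p b')" by (simp add: q_def algebra_simps)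
      then show ?thesis using lam by (simp add: dist_norm)
    qed
    have qcl: "\<forall>i<N. dist (q i) (q (Suc i)) < d0 * lam ^ k"
    proof (intro allI impI)
      fix i assume "i < N"
      then have "dist (p i) (p (Suc i)) < lam * (d0 * lam ^ k)" using cl by (simp add: algebra_simps)
      then show "dist (q i) (q (Suc i)) < d0 * lam ^ k" using lam by (simp add: dq pos_divide_less_eq mult.commute)
    qed
    have "dist (q 0) (q N) \<le> lam ^ Suc k * B" using Suc.IH qF qcl by blast
    then have "dist (p 0) (p N) / lam \<le> lam ^ Suc k * B" by (simp add: dq)
    then show "dist (p 0) (p N) \<le> lam ^ Suc (Suc k) * B" using lam by (simp add: pos_divide_le_eq algebra_simps)
  qed
qed

lemma telescope:
  fixes \<sigma> :: "nat \<Rightarrow> real"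
  shows "(\<forall>i<N. lam \<le> \<sigma> (Suc i) - \<sigma> i) \<Longrightarrow> \<sigma> 0 + real N * lam \<le> \<sigma> N"
proof (induction N)
  case 0 then show ?case by simp
next
  case (Suc N)
  then have "\<sigma> 0 + real N * lam \<le> \<sigma> N" "lam \<le> \<sigma> (Suc N) - \<sigma> N" by auto
  then show ?case by (simp add: algebra_simps)
qed

theorem lemma6p6:
  fixes I :: "'i set" and t :: "'i \<Rightarrow> real \<times> real" and lam :: real
    and F :: "(real \<times> real) set" and \<gamma> :: real and s :: "real \<times> real"
  assumes "finite I" and "I \<noteq> {}"
    and "0 < lam" and "lam < 1"
    and "is_attractor lam t I F"
    and "SSC lam t I F"
    and "\<not> (\<exists>L. affine L \<and> aff_dim L = 1 \<and> F \<subseteq> L)"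
    and "\<gamma> > 0"
    and "(\<lambda>x. \<gamma> *\<^sub>R (x, 0) + s) ` (fst ` F) \<subseteq> F"
  shows "WSC lam (\<lambda>i. fst (t i)) I"
proof (rule ccontr)
  assume nw: "\<not> WSC lam (\<lambda>i. fst (t i)) I"
  note lam = assms(3,4)
  have cF: "compact F" and Fne: "F \<noteq> {}" and Feq: "F = (\<Union>i\<in>I. hom_map lam (t i) ` F)"
    using assms(5) by (auto simp: is_attractor_def)
  define G where "G = fst ` F"
  have Gsub: "word_map lam (\<lambda>i. fst (t i)) w ` G \<subseteq> G" if "w \<in> lists I" for w
  proof
    fix y assume "y \<in> word_map lam (\<lambda>i. fst (t i)) w ` G"
    then obtain z where z: "z \<in> F" "y = word_map lam (\<lambda>i. fst (t i)) w (fst z)" by (auto simp: G_def)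
    have "word_map lam t w z \<in> F" using word_map_sub[OF Feq that] z(1) by blast
    then show "y \<in> G" unfolding G_def using z(2) word_map_fst[of lam t w z] by (metis image_eqI)
  qed
  have Gne: "G \<noteq> {}" using Fne by (simp add: G_def)
  obtain d0 where d0: "d0 > 0" and sep: "\<forall>i\<in>I. \<forall>j\<in>I. i \<noteq> j \<longrightarrow>
     (\<forall>p\<in>hom_map lam (t i) ` F. \<forall>q\<in>hom_map lam (t j) ` F. d0 \<le> dist p q)"
    using sep_pieces[OF assms(1) cF assms(6)] by blast
  obtain B where B: "\<forall>x\<in>F. \<forall>y\<in>F. dist x y \<le> B"
    using compact_imp_bounded[OF cF] bounded_two_points by blast
  have B0: "B \<ge> 0" using B Fne by fastforce
  obtain N :: nat where N: "B / (d0 * lam) < real N" using reals_Archimedean2 by blast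
  obtain r \<sigma> \<beta> where rs: "0 < r" "r \<le> d0 / (2 * \<gamma>)"
      "\<forall>i<N. lam \<le> \<sigma> (Suc i) - \<sigma> i \<and> \<sigma> (Suc i) - \<sigma> i \<le> 1"
      "\<forall>i\<le>N. r * \<sigma> i + \<beta> \<in> G"
  proof -
    have r0: "d0 / (2 * \<gamma>) > 0" using d0 assms(8) by simp
    have cG: "\<forall>r0>0. \<exists>r \<sigma> \<beta>. 0 < r \<and> r \<le> r0 \<and>
           (\<forall>i<N. lam \<le> \<sigma> (Suc i) - \<sigma> i \<and> \<sigma> (Suc i) - \<sigma> i \<le> 1) \<and>
           (\<forall>i\<le>N. r * \<sigma> i + \<beta> \<in> G)"
      apply (rule chain_in_G[OF lam nw assms(2) _ Gne])
      apply (erule Gsub)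
      done
    show ?thesis using cG[rule_format, OF r0] that by blast
  qed
  define \<rho> where "\<rho> = \<gamma> * r"
  have \<rho>pos: "\<rho> > 0" using rs(1) assms(8) by (simp add: \<rho>_def)
  have \<rho>lt: "\<rho> < d0"
  proof -
    have "\<gamma> * r \<le> \<gamma> * (d0 / (2 * \<gamma>))" by (rule mult_left_mono) (use rs(2) assms(8) in auto)
    also have "\<dots> = d0 / 2" using assms(8) by simp
    finally show ?thesis using d0 by (simp add: \<rho>_def)
  qed
  have x01: "0 < \<rho> / d0" "\<rho> / d0 < 1" using \<rho>pos \<rho>lt d0 by auto
  obtain k where k: "lam ^ Suc k \<le> \<rho> / d0" "\<rho> / d0 < lam ^ k"
    using pow_bracket[OF x01 lam] by blast
  define P where "P i = \<gamma> *\<^sub>R (r * \<sigma> i + \<beta>, 0) + s" for i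
  have PF: "\<forall>i\<le>N. P i \<in> F"
    using rs(4) assms(9) unfolding P_def G_def by blast
  have dP: "dist (P i) (P j) = \<rho> * \<bar>\<sigma> i - \<sigma> j\<bar>" for i j
  proof -
    have "dist (P i) (P j) = \<bar>\<gamma> * (r * \<sigma> i + \<beta>) - \<gamma> * (r * \<sigma> j + \<beta>)\<bar>"
      by (simp add: P_def dist_Pair_Pair dist_real_def)
    also have "\<dots> = \<bar>\<rho> * (\<sigma> i - \<sigma> j)\<bar>" by (simp add: \<rho>_def algebra_simps)
    also have "\<dots> = \<rho> * \<bar>\<sigma> i - \<sigma> j\<bar>" using \<rho>pos by (simp add: abs_mult)
    finally show ?thesis .
  qed
  have cl: "\<forall>i<N. dist (P i) (P (Suc i)) < d0 * lam ^ k"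
  proof (intro allI impI)
    fix i assume "i < N"
    then have g1: "lam \<le> \<sigma> (Suc i) - \<sigma> i" "\<sigma> (Suc i) - \<sigma> i \<le> 1" using rs(3) by auto
    then have g: "\<bar>\<sigma> i - \<sigma> (Suc i)\<bar> \<le> 1" using lam by linarith
    have "dist (P i) (P (Suc i)) \<le> \<rho>" unfolding dP using \<rho>pos g
      by (metis mult.right_neutral mult_left_mono less_imp_le)
    also have "\<rho> < d0 * lam ^ k" using k(2) d0 by (simp add: divide_less_eq mult.commute)
    finally show "dist (P i) (P (Suc i)) < d0 * lam ^ k" .
  qed
  have up: "dist (P 0) (P N) \<le> lam ^ Suc k * B"
    using chain_bound[OF lam d0 Feq sep B] PF cl by blast
  also have "\<dots> \<le> (\<rho> / d0) * B" by (rule mult_right_mono) (use k(1) B0 in auto)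
  finally have up2: "dist (P 0) (P N) \<le> (\<rho> / d0) * B" .
  have "\<sigma> 0 + real N * lam \<le> \<sigma> N" using telescope[of N lam \<sigma>] rs(3) by auto
  then have "\<rho> * (real N * lam) \<le> dist (P 0) (P N)" unfolding dP using \<rho>pos
    by (intro mult_left_mono) auto
  with up2 have "\<rho> * (real N * lam) \<le> \<rho> * (B / d0)" by simp
  then have "real N * lam \<le> B / d0" using \<rho>pos by (metis mult_le_cancel_left_pos times_divide_eq_right)
  then have "real N \<le> B / (d0 * lam)" using lam d0 by (simp add: field_simps)
  then show False using N by simp
qed

end
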